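(* Let $\Gamma$ be a simplicial complex and $r\ge 3$. Suppose $v_1,\dots,v_r$ are (not necessarily distinct) vertices of $\Gamma$ such that $\{v_i,v_{i+1}\}$ is an edge of $\Gamma$ for each $1\le i\le r$ (indices mod $r$), and suppose there is at most one index $i$ (mod $r$) such that $\{v_{i-1},v_i,v_{i+1}\}\in\Gamma$. Then $\mathrm{gr}_1(\Gamma)\le r$.
   Context: A simplicial complex $\Gamma$ on a finite vertex set $V=V(\Gamma)$ is a family of subsets of $V$ (faces) closed under taking subsets; edges are faces with 2 elements. Note $\{v_{i-1},v_i,v_{i+1}\}$ is a set, so if $v_{i-1}=v_{i+1}$ it equals the edge $\{v_i,v_{i+1}\}$. For $W\subseteq V$, $\Gamma[W]=\{F\in\Gamma:F\subseteq W\}$. For a face $F$ (possibly empty), $\mathrm{lk}_\Gamma(F)=\{G\setminus F: F\subseteq G\in\Gamma\}$. Fix a field $\mathbf{k}$; $\tilde H_i(\cdot;\mathbf{k})$ is reduced simplicial homology. The $1$-girth is $\mathrm{gr}_{1}(\Gamma)=\min\{|W|: W\subseteq V(\Gamma),\ \tilde H_{1}(\mathrm{lk}_\Gamma(F)[W];\mathbf{k})\neq 0 \text{ for some face } F\in\Gamma \text{ (including } F=\emptyset)\}$, or $\infty$ if none exists. *)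

theory Defs
  imports Main "HOL-Library.Extended_Nat"
begin

definition simplicial_complex :: "'a set \<Rightarrow> 'a set set \<Rightarrow> bool" where
  "simplicial_complex V \<Gamma> \<longleftrightarrow> finite V \<and> \<Gamma> \<subseteq> Pow V \<and>
     (\<forall>F\<in>\<Gamma>. \<forall>G. G \<subseteq> F \<longrightarrow> G \<in> \<Gamma>) \<and> (\<forall>v\<in>V. {v} \<in> \<Gamma>)"

definition induced :: "'a set set \<Rightarrow> 'a set \<Rightarrow> 'a set set" where
  "induced \<Gamma> W = {F \<in> \<Gamma>. F \<subseteq> W}"

definition link :: "'a set set \<Rightarrow> 'a set \<Rightarrow> 'a set set" where
  "link \<Gamma> F = {G - F | G. G \<in> \<Gamma> \<and> F \<subseteq> G}"

text \<open>Simplicial boundary maps with coefficients in a field, simplices oriented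
  by the linear order on vertices. A chain is a function from faces to coefficients.\<close>
definition bd1 :: "'a::linorder set set \<Rightarrow> ('a set \<Rightarrow> 'k::field) \<Rightarrow> 'a \<Rightarrow> 'k" where
  "bd1 K z x = (\<Sum>e\<in>{e\<in>K. card e = 2 \<and> x \<in> e}. (if x = Max e then 1 else -1) * z e)"

definition bd2 :: "'a::linorder set set \<Rightarrow> ('a set \<Rightarrow> 'k::field) \<Rightarrow> 'a set \<Rightarrow> 'k" where
  "bd2 K c e = (\<Sum>t\<in>{t\<in>K. card t = 3 \<and> e \<subseteq> t}.
      (-1) ^ card {y\<in>t. y < the_elem (t - e)} * c t)"

text \<open>Reduced first homology over the field 'k is nonzero iff there is a 1-cycle
  which is not a boundary (reduced and unreduced H_1 coincide).\<close>
definition H1_nonzero :: "'k::field itself \<Rightarrow> 'a::linorder set set \<Rightarrow> bool" where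
  "H1_nonzero _ K \<longleftrightarrow> (\<exists>z :: 'a set \<Rightarrow> 'k.
      (\<forall>e. z e \<noteq> 0 \<longrightarrow> e \<in> K \<and> card e = 2) \<and>
      (\<forall>x. bd1 K z x = 0) \<and>
      \<not> (\<exists>c :: 'a set \<Rightarrow> 'k. (\<forall>t. c t \<noteq> 0 \<longrightarrow> t \<in> K \<and> card t = 3) \<and>
             (\<forall>e. e \<in> K \<and> card e = 2 \<longrightarrow> bd2 K c e = z e)))"

text \<open>1-girth; the infimum of the empty set of enat is \<infinity>.\<close>
definition gr1 :: "'k::field itself \<Rightarrow> 'a::linorder set \<Rightarrow> 'a set set \<Rightarrow> enat" where
  "gr1 k V \<Gamma> = Inf {enat (card W) | W. W \<subseteq> V \<and>
      (\<exists>F\<in>\<Gamma>. H1_nonzero k (induced (link \<Gamma> F) W))}"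

end

theory Submission
  imports Defs
begin

definition goodw :: "'a set set \<Rightarrow> 'a set \<Rightarrow> nat \<Rightarrow> (nat \<Rightarrow> 'a) \<Rightarrow> bool" where
 "goodw \<Gamma> V m u \<longleftrightarrow> 3 \<le> m \<and> (\<forall>k<m. u k \<in> V) \<and>
    (\<forall>k<m. {u k, u (Suc k)} \<in> \<Gamma> \<and> u k \<noteq> u (Suc k)) \<and> u m = u 0 \<and>
    (\<forall>k. 0 < k \<and> k < m \<longrightarrow> {u (k-1), u k, u (Suc k)} \<notin> \<Gamma>)"

lemma goodwI:
  assumes "3 \<le> m" "\<And>k. k < m \<Longrightarrow> u k \<in> V" "\<And>k. k < m \<Longrightarrow> {u k, u (Suc k)} \<in> \<Gamma>"
    "\<And>k. k < m \<Longrightarrow> u k \<noteq> u (Suc k)" "u m = u 0"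
    "\<And>k. 0 < k \<Longrightarrow> k < m \<Longrightarrow> {u (k-1), u k, u (Suc k)} \<notin> \<Gamma>"
  shows "goodw \<Gamma> V m u"
  using assms unfolding goodw_def by auto

lemma sub_good:
  assumes g: "goodw \<Gamma> V m u" and ij: "i < j" "j \<le> m" and eq: "u j = u i" and l: "3 \<le> j - i"
  shows "goodw \<Gamma> V (j - i) (\<lambda>k. u (i + k))"
proof -
  from g have inV: "\<forall>k<m. u k \<in> V"
    and edg: "\<forall>k<m. {u k, u (Suc k)} \<in> \<Gamma> \<and> u k \<noteq> u (Suc k)"
    and crn: "\<forall>k. 0 < k \<and> k < m \<longrightarrow> {u (k-1), u k, u (Suc k)} \<notin> \<Gamma>"
    unfolding goodw_def by auto
  show ?thesis
  proof (rule goodwI, goal_cases)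
    case 1 then show ?case using l by simp
  next
    case (2 k) then show ?case using inV ij by auto
  next
    case (3 k) then show ?case using edg ij by auto
  next
    case (4 k) then show ?case using edg ij by auto
  next
    case 5 then show ?case using eq ij by simp
  next
    case (6 k)
    have "{u (i + k - 1), u (i + k), u (Suc (i + k))} \<notin> \<Gamma>" using crn 6 ij by auto
    moreover have "i + (k - 1) = i + k - 1" using 6 by auto
    ultimately show ?case by simp
  qed
qed

lemma chord_good:
  assumes g: "goodw \<Gamma> V m u" and ij: "Suc i < j" "j < m" and ch: "{u i, u j} \<in> \<Gamma>"
    and ne: "u i \<noteq> u j" and nc: "{u (j - 1), u j, u i} \<notin> \<Gamma>"
  shows "goodw \<Gamma> V (Suc (j - i)) (\<lambda>k. if k \<le> j - i then u (i + k) else u i)"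
proof -
  from g have inV: "\<forall>k<m. u k \<in> V"
    and edg: "\<forall>k<m. {u k, u (Suc k)} \<in> \<Gamma> \<and> u k \<noteq> u (Suc k)"
    and crn: "\<forall>k. 0 < k \<and> k < m \<longrightarrow> {u (k-1), u k, u (Suc k)} \<notin> \<Gamma>"
    unfolding goodw_def by auto
  show ?thesis
  proof (rule goodwI, goal_cases)
    case 1 then show ?case using ij by simp
  next
    case (2 k) then show ?case using inV ij by auto
  next
    case (3 k)
    show ?case
    proof (cases "Suc k \<le> j - i")
      case True then show ?thesis using edg ij by auto
    next
      case False
      then have "k = j - i" using 3 by simp
      then show ?thesis using ch ij by (auto simp: insert_commute)
    qed
  next
    case (4 k)
    show ?case
    proof (cases "Suc k \<le> j - i")
      case True then show ?thesis using edg ij by auto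
    next
      case False
      then have "k = j - i" using 4 by simp
      then show ?thesis using ne ij by auto
    qed
  next
    case 5 then show ?case by simp
  next
    case (6 k)
    show ?case
    proof (cases "k < j - i")
      case True
      have "{u (i + k - 1), u (i + k), u (Suc (i + k))} \<notin> \<Gamma>" using crn 6 ij True by auto
      moreover have "i + (k - 1) = i + k - 1" using 6 by auto
      moreover have "k - 1 \<le> j - i" "k \<le> j - i" "Suc k \<le> j - i" using True by auto
      ultimately show ?thesis by simp
    next
      case False
      then have k: "k = j - i" using 6 by simp
      have "i + (k - 1) = j - 1" "i + k = j" using k ij by auto
      moreover have "k - 1 \<le> j - i" "\<not> Suc k \<le> j - i" using k by auto
      ultimately show ?thesis using nc k by simp
    qed
  qed
qed


lemma homology_part:
  fixes V :: "'a::linorder set" and \<Gamma> :: "'a set set"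
  assumes sc: "simplicial_complex V \<Gamma>" and g: "goodw \<Gamma> V m u"
    and dist: "\<And>i j. i < j \<Longrightarrow> j < m \<Longrightarrow> u i \<noteq> u j"
    and notri: "\<And>t. t \<in> \<Gamma> \<Longrightarrow> t \<subseteq> u ` {..<m} \<Longrightarrow> card t \<noteq> 3"
  shows "H1_nonzero TYPE('k::field) (induced \<Gamma> (u ` {..<m}))"
proof -
  define W where "W = u ` {..<m}"
  define K where "K = induced \<Gamma> W"
  define E where "E k = {u k, u (Suc k)}" for k
  define s :: "nat \<Rightarrow> 'k" where "s k = (if u (Suc k) = Max (E k) then 1 else -1)" for k
  define z :: "'a set \<Rightarrow> 'k" where "z e = (\<Sum>k<m. if e = E k then s k else 0)" for e
  from g have m3: "3 \<le> m" and edg: "\<forall>k<m. E k \<in> \<Gamma> \<and> u k \<noteq> u (Suc k)" and um: "u m = u 0"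
    unfolding goodw_def E_def by auto
  have finV: "finite V" and GP: "\<Gamma> \<subseteq> Pow V" using sc unfolding simplicial_complex_def by auto
  have finG: "finite \<Gamma>" using finite_subset[OF GP] finV by auto
  have finK: "finite K" unfolding K_def induced_def using finG by auto
  have EW: "E k \<subseteq> W" if "k < m" for k
  proof -
    have "u (Suc k) \<in> W"
    proof (cases "Suc k < m")
      case True thus ?thesis unfolding W_def by auto
    next
      case False then have "Suc k = m" using that by auto
      thus ?thesis using um m3 unfolding W_def by (auto intro!: image_eqI[of _ _ 0])
    qed
    thus ?thesis using that unfolding E_def W_def by auto
  qed
  have EK: "E k \<in> K" "card (E k) = 2" if "k < m" for k
    using EW[OF that] edg that unfolding K_def induced_def E_def by auto
  have supp: "\<forall>e. z e \<noteq> 0 \<longrightarrow> e \<in> K \<and> card e = 2"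
  proof (intro allI impI)
    fix e assume nz: "z e \<noteq> 0"
    have "\<exists>k<m. e = E k"
    proof (rule ccontr)
      assume "\<not> (\<exists>k<m. e = E k)"
      hence "z e = 0" unfolding z_def by (auto intro!: sum.neutral)
      with nz show False by simp
    qed
    thus "e \<in> K \<and> card e = 2" using EK by auto
  qed
  have cyc: "\<forall>x. bd1 K z x = 0"
  proof
    fix x
    define A where "A = {e\<in>K. card e = 2 \<and> x \<in> e}"
    define g :: "nat \<Rightarrow> 'k" where "g k = (if x = u k then 1 else 0)" for k
    have finA: "finite A" using finK unfolding A_def by auto
    have "bd1 K z x = (\<Sum>e\<in>A. (if x = Max e then 1 else -1) * z e)"
      unfolding bd1_def A_def by simp
    also have "\<dots> = (\<Sum>e\<in>A. \<Sum>k<m. (if e = E k then (if x = Max e then 1 else -1) * s k else 0))"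
      unfolding z_def sum_distrib_left by (intro sum.cong refl) auto
    also have "\<dots> = (\<Sum>k<m. \<Sum>e\<in>A. (if e = E k then (if x = Max e then 1 else -1) * s k else 0))"
      by (rule sum.swap)
    also have "\<dots> = (\<Sum>k<m. (if E k \<in> A then (if x = Max (E k) then 1 else -1) * s k else 0))"
      using finA by (simp add: sum.delta)
    also have "\<dots> = (\<Sum>k<m. g (Suc k) - g k)"
    proof (rule sum.cong[OF refl])
      fix k assume "k \<in> {..<m}"
      then have k: "k < m" by simp
      have ne: "u k \<noteq> u (Suc k)" using edg k by auto
      have EA: "E k \<in> A \<longleftrightarrow> x \<in> E k" using EK[OF k] unfolding A_def by auto
      show "(if E k \<in> A then (if x = Max (E k) then 1 else -1) * s k else 0) = g (Suc k) - g k"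
        unfolding EA unfolding s_def g_def E_def using ne by (auto simp: max_def)
    qed
    also have "\<dots> = g m - g 0" by (rule sum_lessThan_telescope)
    also have "\<dots> = 0" using um g_def by simp
    finally show "bd1 K z x = 0" .
  qed
  have uniq: "E k = E 0 \<longleftrightarrow> k = 0" if k: "k < m" for k
  proof
    assume h: "E k = E 0"
    show "k = 0"
    proof (rule ccontr)
      assume k0: "k \<noteq> 0"
      have "u k \<in> {u 0, u 1}" using h unfolding E_def by auto
      moreover have "u k \<noteq> u 0" using dist[of 0 k] k k0 by auto
      ultimately have uk: "u k = u 1" by auto
      have k1: "k = 1"
      proof (rule ccontr)
        assume "k \<noteq> 1"
        then have "1 < k" using k0 by auto
        thus False using dist[of 1 k] k uk by auto
      qed
      have "u 2 \<in> {u 0, u 1}" using h k1 unfolding E_def by (auto simp: numeral_2_eq_2)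
      thus False using dist[of 0 2] dist[of 1 2] m3 by auto
    qed
  qed simp
  have z0: "z (E 0) = s 0"
  proof -
    have "z (E 0) = (\<Sum>k<m. if k = 0 then s k else 0)"
      unfolding z_def by (rule sum.cong[OF refl]) (metis lessThan_iff uniq)
    also have "\<dots> = s 0" using m3 by simp
    finally show ?thesis .
  qed
  have s0: "s 0 \<noteq> 0" unfolding s_def by simp
  have nob: "\<not> (\<exists>c :: 'a set \<Rightarrow> 'k. (\<forall>t. c t \<noteq> 0 \<longrightarrow> t \<in> K \<and> card t = 3) \<and>
             (\<forall>e. e \<in> K \<and> card e = 2 \<longrightarrow> bd2 K c e = z e))"
  proof
    assume "\<exists>c :: 'a set \<Rightarrow> 'k. (\<forall>t. c t \<noteq> 0 \<longrightarrow> t \<in> K \<and> card t = 3) \<and>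
             (\<forall>e. e \<in> K \<and> card e = 2 \<longrightarrow> bd2 K c e = z e)"
    then obtain c :: "'a set \<Rightarrow> 'k" where hc: "\<forall>e. e \<in> K \<and> card e = 2 \<longrightarrow> bd2 K c e = z e" by blast
    have empt: "{t\<in>K. card t = 3 \<and> E 0 \<subseteq> t} = {}"
      using notri unfolding K_def induced_def W_def by auto
    have "bd2 K c (E 0) = 0" unfolding bd2_def empt by simp
    moreover have "bd2 K c (E 0) = z (E 0)" using hc EK[of 0] m3 by auto
    ultimately show False using z0 s0 by simp
  qed
  have "H1_nonzero TYPE('k) K" unfolding H1_nonzero_def using supp cyc nob by blast
  thus ?thesis unfolding K_def W_def .
qed


lemma reduce:
  assumes sc: "simplicial_complex V \<Gamma>" and g: "goodw \<Gamma> V r v"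
  shows "\<exists>m u. m \<le> r \<and> goodw \<Gamma> V m u \<and> (\<forall>i j. i < j \<longrightarrow> j < m \<longrightarrow> u i \<noteq> u j) \<and>
     (\<forall>t. t \<in> \<Gamma> \<longrightarrow> t \<subseteq> u ` {..<m} \<longrightarrow> card t \<noteq> 3)"
proof -
  define m where "m = (LEAST m. \<exists>u. goodw \<Gamma> V m u)"
  have ex: "\<exists>u. goodw \<Gamma> V m u"
    using LeastI[of "\<lambda>m. \<exists>u. goodw \<Gamma> V m u" r] g unfolding m_def by blast
  have mr: "m \<le> r" unfolding m_def using g by (blast intro: Least_le)
  have minim: "\<And>m' w. goodw \<Gamma> V m' w \<Longrightarrow> m \<le> m'" unfolding m_def by (blast intro: Least_le)
  from ex obtain u where gu: "goodw \<Gamma> V m u" by blast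
  from gu have m3: "3 \<le> m"
    and edg: "\<And>k. k<m \<Longrightarrow> {u k, u (Suc k)} \<in> \<Gamma>" "\<And>k. k < m \<Longrightarrow> u k \<noteq> u (Suc k)"
    and um: "u m = u 0"
    and crn: "\<And>k. 0 < k \<Longrightarrow> k < m \<Longrightarrow> {u (k-1), u k, u (Suc k)} \<notin> \<Gamma>"
    unfolding goodw_def by auto
  have down: "\<And>F G. F \<in> \<Gamma> \<Longrightarrow> G \<subseteq> F \<Longrightarrow> G \<in> \<Gamma>" using sc unfolding simplicial_complex_def by blast
  have dist: "u i \<noteq> u j" if ij: "i < j" "j < m" for i j
  proof
    assume eq: "u i = u j"
    consider "j = Suc i" | "j = Suc (Suc i)" | "Suc (Suc i) < j" using ij by linarith
    then show False
    proof cases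
      case 1 thus False using edg(2)[of i] eq ij by auto
    next
      case 2
      have "{u (Suc i - 1), u (Suc i), u (Suc (Suc i))} \<notin> \<Gamma>" using crn[of "Suc i"] 2 ij by auto
      moreover have "{u (Suc i - 1), u (Suc i), u (Suc (Suc i))} = {u i, u (Suc i)}" using eq 2 by auto
      ultimately show False using edg(1)[of i] ij by auto
    next
      case 3
      have "goodw \<Gamma> V (j - i) (\<lambda>k. u (i + k))"
        by (rule sub_good[OF gu]) (use ij eq 3 in auto)
      then have "m \<le> j - i" by (rule minim)
      thus False using ij by auto
    qed
  qed
  have nochord_d: "\<forall>i j. j - i = d \<longrightarrow> i < j \<longrightarrow> j < m \<longrightarrow> {u i, u j} \<in> \<Gamma> \<longrightarrow> j = Suc i \<or> (i = 0 \<and> j = m - 1)" for d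
  proof (induction d rule: less_induct)
    case (less d)
    show ?case
    proof (intro allI impI)
      fix i j assume d: "j - i = d" and ij: "i < j" "j < m" and ch: "{u i, u j} \<in> \<Gamma>"
      show "j = Suc i \<or> (i = 0 \<and> j = m - 1)"
      proof (rule ccontr)
        assume na: "\<not> (j = Suc i \<or> (i = 0 \<and> j = m - 1))"
        hence si: "Suc i < j" using ij by auto
        have lt: "Suc (j - i) < m" using ij na by (cases "i = 0") auto
        have tri: "{u (j - 1), u j, u i} \<in> \<Gamma>"
        proof (rule ccontr)
          assume "{u (j - 1), u j, u i} \<notin> \<Gamma>"
          then have "goodw \<Gamma> V (Suc (j-i)) (\<lambda>k. if k \<le> j - i then u (i+k) else u i)"
            using chord_good[OF gu si ij(2) ch] dist[OF ij] by blast
          then have "m \<le> Suc (j - i)" by (rule minim)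
          with lt show False by simp
        qed
        then have ch2: "{u i, u (j-1)} \<in> \<Gamma>" by (rule down) auto
        show False
        proof (cases "j - 1 = Suc i")
          case True
          then have jj: "j = Suc (Suc i)" using si by auto
          have "{u (j - 1), u j, u i} = {u (Suc i - 1), u (Suc i), u (Suc (Suc i))}"
            unfolding jj by (auto simp: insert_commute)
          moreover have "{u (Suc i - 1), u (Suc i), u (Suc (Suc i))} \<notin> \<Gamma>" using crn[of "Suc i"] si ij by auto
          ultimately show False using tri by simp
        next
          case False
          then have "i < j - 1" using si by simp
          moreover have "j - 1 - i < d" using d si by auto
          ultimately have "j - 1 = Suc i \<or> (i = 0 \<and> j - 1 = m - 1)"
            using less.IH ch2 ij by auto
          thus False using False ij by auto
        qed
      qed
    qed
  qed
  have adj: "q = Suc p \<or> p = Suc q \<or> (p = 0 \<and> q = m - 1) \<or> (q = 0 \<and> p = m - 1)"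
    if "p < m" "q < m" "p \<noteq> q" "{u p, u q} \<in> \<Gamma>" for p q
  proof (cases "p < q")
    case True thus ?thesis using nochord_d[of "q - p"] that by auto
  next
    case False
    then have "q < p" using that by auto
    moreover have "{u q, u p} \<in> \<Gamma>" using that by (simp add: insert_commute)
    ultimately show ?thesis using nochord_d[of "p - q"] that by auto
  qed
  have notri: "card t \<noteq> 3" if t: "t \<in> \<Gamma>" "t \<subseteq> u ` {..<m}" for t
  proof
    assume c3: "card t = 3"
    then obtain x y z where txyz: "t = {x, y, z}" and ne: "x \<noteq> y" "y \<noteq> z" "x \<noteq> z"
      by (auto simp: card_3_iff)
    have xyz: "x \<in> u ` {..<m}" "y \<in> u ` {..<m}" "z \<in> u ` {..<m}" using t(2) txyz by auto
    obtain a where a: "a < m" "x = u a" using xyz(1) by auto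
    obtain b where b: "b < m" "y = u b" using xyz(2) by auto
    obtain c where c: "c < m" "z = u c" using xyz(3) by auto
    have abc: "a < m" "b < m" "c < m" "x = u a" "y = u b" "z = u c" using a b c by auto
    have "{u a, u b} \<subseteq> t" "{u b, u c} \<subseteq> t" "{u a, u c} \<subseteq> t" using txyz abc by auto
    then have e: "{u a, u b} \<in> \<Gamma>" "{u b, u c} \<in> \<Gamma>" "{u a, u c} \<in> \<Gamma>"
      using down[OF t(1)] by blast+
    have n: "a \<noteq> b" "b \<noteq> c" "a \<noteq> c" using ne abc by auto
    show False
    proof (cases "m = 3")
      case True
      have L: "{..<m} = {0, 1, 2::nat}" using True by auto
      have "t = {u 0, u 1, u 2}"
      proof (rule card_seteq)
        show "finite {u 0, u 1, u 2}" by simp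
        show "t \<subseteq> {u 0, u 1, u 2}" using t(2) L by auto
        show "card {u 0, u 1, u 2} \<le> card t" using c3 by (simp add: card_insert_le_m1)
      qed
      moreover have "{u (1 - 1), u 1, u (Suc 1)} \<notin> \<Gamma>" using crn[of 1] m3 by auto
      ultimately show False using t(1) by (simp add: numeral_2_eq_2)
    next
      case False
      then have m4: "4 \<le> m" using m3 by auto
      have "b = Suc a \<or> a = Suc b \<or> (a = 0 \<and> b = m - 1) \<or> (b = 0 \<and> a = m - 1)"
        using adj[OF abc(1,2) n(1) e(1)] .
      moreover have "c = Suc b \<or> b = Suc c \<or> (b = 0 \<and> c = m - 1) \<or> (c = 0 \<and> b = m - 1)"
        using adj[OF abc(2,3) n(2) e(2)] .
      moreover have "c = Suc a \<or> a = Suc c \<or> (a = 0 \<and> c = m - 1) \<or> (c = 0 \<and> a = m - 1)"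
        using adj[OF abc(1,3) n(3) e(3)] .
      ultimately show False using n m4 abc(1-3) by (elim disjE) linarith+
    qed
  qed
  show ?thesis using mr gu dist notri by blast
qed


lemma link_empty: "link \<Gamma> {} = \<Gamma>"
  unfolding link_def by auto

theorem mainTheorem4:
  fixes V :: "'a::linorder set" and \<Gamma> :: "'a set set" and r :: nat and v :: "nat \<Rightarrow> 'a"
  assumes "simplicial_complex V \<Gamma>"
    and "r \<ge> 3"
    and "\<forall>i<r. v i \<in> V"
    and "\<forall>i<r. {v i, v ((i + 1) mod r)} \<in> \<Gamma> \<and> card {v i, v ((i + 1) mod r)} = 2"
    and "card {i. i < r \<and> {v ((i + r - 1) mod r), v i, v ((i + 1) mod r)} \<in> \<Gamma>} \<le> 1"
  shows "gr1 TYPE('k::field) V \<Gamma> \<le> enat r"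
proof -
  define S where "S = {i. i < r \<and> {v ((i + r - 1) mod r), v i, v ((i + 1) mod r)} \<in> \<Gamma>}"
  have finS: "finite S" by (rule finite_subset[of _ "{..<r}"]) (auto simp: S_def)
  have cS: "card S \<le> Suc 0" using assms(5) unfolding S_def by simp
  have r0: "0 < r" using assms(2) by simp
  obtain p where p: "p < r" "\<forall>q\<in>S. q = p"
  proof (cases "S = {}")
    case True show ?thesis by (rule that[of 0]) (use r0 True in simp_all)
  next
    case False then obtain p where pS: "p \<in> S" by blast
    have pr: "p < r" using pS unfolding S_def by simp
    have all: "\<forall>x\<in>S. \<forall>y\<in>S. x = y" using cS finS card_le_Suc0_iff_eq[of S] by blast
    show ?thesis by (rule that[of p]) (use pr pS all in blast)+
  qed
  define w where "w k = v ((k + p) mod r)" for k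
  have wsuc: "w (Suc k) = v (((k + p) mod r + 1) mod r)" for k
    unfolding w_def by (simp add: mod_Suc_eq)
  have wpred: "w k = v (((Suc k + p) mod r + r - 1) mod r)" for k
  proof -
    define s where "s = (k + p) mod r"
    have sr: "s < r" using r0 unfolding s_def by auto
    have q: "(Suc k + p) mod r = Suc s mod r" unfolding s_def by (simp add: mod_Suc_eq)
    show ?thesis
    proof (cases "Suc s < r")
      case True
      then have "(Suc k + p) mod r = Suc s" using q by simp
      moreover have "(Suc s + r - 1) mod r = s" using sr by simp
      ultimately show ?thesis unfolding w_def s_def[symmetric] by simp
    next
      case False
      then have sr2: "Suc s = r" using sr by simp
      then have "(Suc k + p) mod r = 0" using q by simp
      moreover have "(0 + r - 1) mod r = s" using sr2 by simp
      ultimately show ?thesis unfolding w_def s_def[symmetric] by simp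
    qed
  qed
  have gw: "goodw \<Gamma> V r w"
  proof (rule goodwI, goal_cases)
    case 1 show ?case using assms(2) .
  next
    case (2 k)
    have "(k + p) mod r < r" using r0 by simp
    then show ?case using assms(3) unfolding w_def by blast
  next
    case (3 k)
    have "(k + p) mod r < r" using r0 by simp
    then have "{v ((k + p) mod r), v (((k + p) mod r + 1) mod r)} \<in> \<Gamma>" using assms(4) by blast
    then show ?case unfolding wsuc unfolding w_def .
  next
    case (4 k)
    have "(k + p) mod r < r" using r0 by simp
    then have "card {v ((k + p) mod r), v (((k + p) mod r + 1) mod r)} = 2" using assms(4) by blast
    then have "v ((k + p) mod r) \<noteq> v (((k + p) mod r + 1) mod r)" by (cases "v ((k + p) mod r) = v (((k + p) mod r + 1) mod r)") simp_all
    then show ?case unfolding wsuc unfolding w_def .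
  next
    case 5 show ?case unfolding w_def by simp
  next
    case (6 k)
    then obtain k' where k': "k = Suc k'" by (cases k) auto
    define q where "q = (k + p) mod r"
    have qr: "q < r" using r0 unfolding q_def by auto
    have eq: "{w (k - 1), w k, w (Suc k)} = {v ((q + r - 1) mod r), v q, v ((q + 1) mod r)}"
      unfolding q_def using wpred[of k'] wsuc[of k] k' by (simp add: w_def)
    show ?case
    proof
      assume "{w (k - 1), w k, w (Suc k)} \<in> \<Gamma>"
      then have "q \<in> S" unfolding eq S_def using qr by auto
      then have qp: "(k + p) mod r = p" using p(2) unfolding q_def by blast
      show False
      proof (cases "k + p < r")
        case True then show False using qp 6 by simp
      next
        case False
        then have "(k + p) mod r = (k + p - r) mod r" by (intro le_mod_geq) simp
        also have "\<dots> = k + p - r" by (rule mod_less) (use 6 p in linarith)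
        finally show False using qp 6 by simp
      qed
    qed
  qed
  obtain m u where mu: "m \<le> r" "goodw \<Gamma> V m u" "\<forall>i j. i < j \<longrightarrow> j < m \<longrightarrow> u i \<noteq> u j"
     "\<forall>t. t \<in> \<Gamma> \<longrightarrow> t \<subseteq> u ` {..<m} \<longrightarrow> card t \<noteq> 3"
    using reduce[OF assms(1) gw] by blast
  have H: "H1_nonzero TYPE('k) (induced \<Gamma> (u ` {..<m}))"
    by (rule homology_part[OF assms(1) mu(2)]) (use mu(3,4) in auto)
  have WV: "u ` {..<m} \<subseteq> V" using mu(2) unfolding goodw_def by auto
  have emp: "{} \<in> \<Gamma>"
  proof -
    have "{v 0} \<in> \<Gamma>" using assms(1,3) r0 unfolding simplicial_complex_def by auto
    then show ?thesis using assms(1) unfolding simplicial_complex_def by blast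
  qed
  have cW: "card (u ` {..<m}) \<le> r" using card_image_le[of "{..<m}" u] mu(1) by auto
  have "enat (card (u ` {..<m})) \<in> {enat (card W) | W. W \<subseteq> V \<and>
      (\<exists>F\<in>\<Gamma>. H1_nonzero TYPE('k) (induced (link \<Gamma> F) W))}"
    using WV emp H link_empty[of \<Gamma>] by (auto intro!: exI[of _ "u ` {..<m}"] bexI[of _ "{}"])
  then have "gr1 TYPE('k) V \<Gamma> \<le> enat (card (u ` {..<m}))"
    unfolding gr1_def by (rule Inf_lower)
  also have "\<dots> \<le> enat r" using cW by simp
  finally show ?thesis .
qed

end
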